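(* Let $H$ be a complex Hilbert space and let $T$ be a densely defined closed linear operator in $H$ with domain $D(T)$ such that $D(T)\subset D(T^* )$. Suppose $T$ is nilpotent, i.e. there is $n\in\mathbb{N}$ such that $T^n$ is well defined with $D(T^n)=D(T)$ and $T^n x=0$ for all $x\in D(T)$. Then $T\in B(H)$ (i.e. $D(T)=H$ and $T$ is bounded). In particular, if $T$ is a closed densely defined nilpotent operator which is symmetric or hyponormal, then $T=0$ everywhere on $H$.
   Context: Products of unbounded operators are taken on natural domains: $D(ST)=\{x\in D(T): Tx\in D(S)\}$, and $T^n$ is defined accordingly. Nilpotence of $T$ means $D(T^n)=D(T^{n-1})=\dots=D(T)$ and $T^n=0$ on $D(T)$. A densely defined $T$ is symmetric if $T\subset T^*$ (i.e. $D(T)\subset D(T^* )$ and $T^*=T$ on $D(T)$). A densely defined $T$ is hyponormal if $D(T)\subset D(T^* )$ and $\|T^*x\|\leq\|Tx\|$ for all $x\in D(T)$. $B(H)$ is the algebra of everywhere defined bounded operators on $H$. *)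

theory Defs
  imports "HOL-Analysis.Analysis"
begin

text \<open>The distribution has no complex inner product spaces, so we introduce them as type
classes (following the usual axioms; the inner product is conjugate-linear in the first
argument and linear in the second).\<close>

class complex_vector = real_vector +
  fixes scaleC :: "complex \<Rightarrow> 'a \<Rightarrow> 'a"
  assumes scaleC_add_right: "scaleC a (x + y) = scaleC a x + scaleC a y"
    and scaleC_add_left: "scaleC (a + b) x = scaleC a x + scaleC b x"
    and scaleC_scaleC: "scaleC a (scaleC b x) = scaleC (a * b) x"
    and scaleC_one: "scaleC 1 x = x"
    and scaleR_scaleC: "scaleR r x = scaleC (complex_of_real r) x"

class complex_inner = complex_vector + real_normed_vector +
  fixes cinner :: "'a \<Rightarrow> 'a \<Rightarrow> complex"
  assumes cinner_commute: "cinner x y = cnj (cinner y x)"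
    and cinner_add_left: "cinner (x + y) z = cinner x z + cinner y z"
    and cinner_scaleC_left: "cinner (scaleC r x) y = cnj r * cinner x y"
    and cinner_self_real: "Im (cinner x x) = 0"
    and cinner_self_nonneg: "0 \<le> Re (cinner x x)"
    and cinner_self_eq_zero: "cinner x x = 0 \<longleftrightarrow> x = 0"
    and norm_eq_sqrt_cinner: "norm x = sqrt (Re (cinner x x))"

class chilbert_space = complex_inner + complete_space

text \<open>An operator in H is a pair (D, T): a domain D and a function T, only meaningful on D.\<close>

definition csubspace :: "'a::complex_vector set \<Rightarrow> bool" where
  "csubspace S \<longleftrightarrow> 0 \<in> S \<and> (\<forall>x\<in>S. \<forall>y\<in>S. x + y \<in> S) \<and> (\<forall>c. \<forall>x\<in>S. scaleC c x \<in> S)"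

definition linear_op :: "'a::complex_vector set \<Rightarrow> ('a \<Rightarrow> 'a) \<Rightarrow> bool" where
  "linear_op D T \<longleftrightarrow> csubspace D \<and> (\<forall>x\<in>D. \<forall>y\<in>D. T (x + y) = T x + T y)
     \<and> (\<forall>c. \<forall>x\<in>D. T (scaleC c x) = scaleC c (T x))"

definition densely_defined :: "'a::complex_inner set \<Rightarrow> bool" where
  "densely_defined D \<longleftrightarrow> closure D = UNIV"

definition closed_op :: "'a::complex_inner set \<Rightarrow> ('a \<Rightarrow> 'a) \<Rightarrow> bool" where
  "closed_op D T \<longleftrightarrow> closed {(x, T x) | x. x \<in> D}"

definition adj_dom :: "'a::complex_inner set \<Rightarrow> ('a \<Rightarrow> 'a) \<Rightarrow> 'a set" where
  "adj_dom D T = {y. \<exists>z. \<forall>x\<in>D. cinner (T x) y = cinner x z}"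

definition adj :: "'a::complex_inner set \<Rightarrow> ('a \<Rightarrow> 'a) \<Rightarrow> 'a \<Rightarrow> 'a" where
  "adj D T y = (THE z. \<forall>x\<in>D. cinner (T x) y = cinner x z)"

fun pow_dom :: "'a set \<Rightarrow> ('a \<Rightarrow> 'a) \<Rightarrow> nat \<Rightarrow> 'a set" where
  "pow_dom D T 0 = UNIV"
| "pow_dom D T (Suc k) = {x \<in> D. T x \<in> pow_dom D T k}"

definition nilpotent_op :: "'a::complex_vector set \<Rightarrow> ('a \<Rightarrow> 'a) \<Rightarrow> bool" where
  "nilpotent_op D T \<longleftrightarrow> (\<exists>n. pow_dom D T n = D \<and> (\<forall>x\<in>D. (T ^^ n) x = 0))"

definition symmetric_op :: "'a::complex_inner set \<Rightarrow> ('a \<Rightarrow> 'a) \<Rightarrow> bool" where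
  "symmetric_op D T \<longleftrightarrow> densely_defined D \<and> D \<subseteq> adj_dom D T \<and> (\<forall>x\<in>D. adj D T x = T x)"

definition hyponormal_op :: "'a::complex_inner set \<Rightarrow> ('a \<Rightarrow> 'a) \<Rightarrow> bool" where
  "hyponormal_op D T \<longleftrightarrow> densely_defined D \<and> D \<subseteq> adj_dom D T
     \<and> (\<forall>x\<in>D. norm (adj D T x) \<le> norm (T x))"

end

theory Submission imports Defs begin
instance chilbert_space \<subseteq> banach ..

context begin
lemma cinner_add_right: "cinner (x::'a::complex_inner) (y + z) = cinner x y + cinner x z"
  by (metis cinner_add_left cinner_commute complex_cnj_add)
lemma cinner_scaleC_right: "cinner (x::'a::complex_inner) (scaleC c y) = c * cinner x y"
  by (metis cinner_scaleC_left cinner_commute complex_cnj_cnj complex_cnj_mult)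
lemma cinner_scaleR_left: "cinner (scaleR r (x::'a::complex_inner)) y = of_real r * cinner x y"
  by (simp add: scaleR_scaleC cinner_scaleC_left)
lemma cinner_scaleR_right: "cinner (x::'a::complex_inner) (scaleR r y) = of_real r * cinner x y"
  by (simp add: scaleR_scaleC cinner_scaleC_right)
lemma cinner_minus_left: "cinner (- (x::'a::complex_inner)) y = - cinner x y"
proof -
  have "cinner (- x) y = cinner (scaleR (-1) x) y" by simp
  also have "\<dots> = - cinner x y" by (simp only: cinner_scaleR_left) simp
  finally show ?thesis .
qed
lemma cinner_minus_right: "cinner (x::'a::complex_inner) (- y) = - cinner x y"
proof -
  have "cinner x (- y) = cinner x (scaleR (-1) y)" by simp
  also have "\<dots> = - cinner x y" by (simp only: cinner_scaleR_right) simp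
  finally show ?thesis .
qed
lemma cinner_diff_left: "cinner ((x::'a::complex_inner) - y) z = cinner x z - cinner y z"
  by (simp only: diff_conv_add_uminus cinner_add_left cinner_minus_left)
lemma cinner_diff_right: "cinner (x::'a::complex_inner) (y - z) = cinner x y - cinner x z"
  by (simp only: diff_conv_add_uminus cinner_add_right cinner_minus_right)
lemma cinner_zero_left: "cinner 0 (y::'a::complex_inner) = 0"
  by (metis add_0 add_cancel_right_right cinner_add_left)
lemma cinner_zero_right: "cinner (y::'a::complex_inner) 0 = 0"
  by (metis add_0 add_cancel_right_right cinner_add_right)
lemma norm_sq_cinner: "(norm (x::'a::complex_inner))^2 = Re (cinner x x)"
  by (simp add: norm_eq_sqrt_cinner cinner_self_nonneg)
lemma norm_mult_self_cinner: "norm (x::'a::complex_inner) * norm x = Re (cinner x x)"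
  using norm_sq_cinner[of x] by (simp add: power2_eq_square)
lemma Re_cinner_commute: "Re (cinner (x::'a::complex_inner) y) = Re (cinner y x)"
  by (metis cinner_commute complex_cnj_cnj cnj.sel(1))

lemma re_cs: "\<bar>Re (cinner (x::'a::complex_inner) y)\<bar> \<le> norm x * norm y"
proof (cases "y = 0")
  case True then show ?thesis by (simp add: cinner_zero_right)
next
  case False
  define R where "R = Re (cinner x y)"
  define N where "N = (norm y)^2"
  have N: "N > 0" using False by (simp add: N_def)
  define l where "l = - R / N"
  have "0 \<le> Re (cinner (x + scaleR l y) (x + scaleR l y))"
    by (rule cinner_self_nonneg)
  also have "\<dots> = (norm x)^2 + 2 * l * R + l^2 * N"
    by (simp add: cinner_add_left cinner_add_right cinner_scaleR_left cinner_scaleR_right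
        norm_mult_self_cinner R_def N_def Re_cinner_commute[of y x] power2_eq_square algebra_simps)
  also have "\<dots> = (norm x)^2 - R^2 / N"
    using N by (simp add: l_def field_simps power2_eq_square)
  finally have "R^2 \<le> (norm x)^2 * N" using N by (simp add: field_simps)
  also have "\<dots> = (norm x * norm y)^2" by (simp add: N_def power_mult_distrib)
  finally have "\<bar>R\<bar>^2 \<le> (norm x * norm y)^2" by simp
  then show ?thesis unfolding R_def
    by (meson abs_ge_zero mult_nonneg_nonneg norm_ge_zero power2_le_imp_le)
qed

lemma bl_Re_right: "bounded_linear (\<lambda>y. Re (cinner (u::'a::complex_inner) y))"
  apply (rule bounded_linear_intro[where K="norm u"])
    apply (simp add: cinner_add_right)
   apply (simp add: cinner_scaleR_right)
  using re_cs[of u] by (simp add: mult.commute)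

lemma bl_Re_left: "bounded_linear (\<lambda>x. Re (cinner x (w::'a::complex_inner)))"
  apply (rule bounded_linear_intro[where K="norm w"])
    apply (simp add: cinner_add_left)
   apply (simp add: cinner_scaleR_left)
  using re_cs[of _ w] by simp

lemma dense_zero:
  fixes w :: "'a::complex_inner"
  assumes "densely_defined D" "\<forall>u\<in>D. Re (cinner u w) = 0"
  shows "w = 0"
proof -
  have cl: "closed {x. Re (cinner x w) = 0}"
    using bounded_linear.continuous_on[OF bl_Re_left continuous_on_id]
    by (intro closed_Collect_eq) auto
  have "closure D \<subseteq> {x. Re (cinner x w) = 0}"
    using assms(2) by (intro closure_minimal[OF _ cl]) auto
  then have "Re (cinner w w) = 0" using assms(1) by (auto simp: densely_defined_def)
  then show ?thesis using norm_sq_cinner[of w] by simp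
qed

lemma adj_char:
  fixes D :: "'a::complex_inner set"
  assumes "densely_defined D" "y \<in> adj_dom D T"
  shows "\<forall>x\<in>D. cinner (T x) y = cinner x (adj D T y)"
proof -
  obtain z where z: "\<forall>x\<in>D. cinner (T x) y = cinner x z" using assms(2) by (auto simp: adj_dom_def)
  have uq: "z' = z" if "\<forall>x\<in>D. cinner (T x) y = cinner x z'" for z'
  proof -
    have "z' - z = 0"
      using that z by (intro dense_zero[OF assms(1)]) (auto simp: cinner_diff_right)
    then show ?thesis by simp
  qed
  show ?thesis unfolding adj_def
    by (rule theI[of "\<lambda>z. \<forall>x\<in>D. cinner (T x) y = cinner x z", OF z]) (use uq in blast)
qed

lemma adj_unique:
  fixes D :: "'a::complex_inner set"
  assumes "densely_defined D" "y \<in> adj_dom D T" "\<forall>x\<in>D. cinner (T x) y = cinner x z"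
  shows "adj D T y = z"
proof -
  have "z - adj D T y = 0"
    using adj_char[OF assms(1,2)] assms(3) by (intro dense_zero[OF assms(1)]) (auto simp: cinner_diff_right)
  then show ?thesis by simp
qed
end
lemma closed_graph_bound:
  fixes f :: "'a::banach \<Rightarrow> 'b::banach" and S :: "'a set"
  assumes Scl: "closed S" and Ssub: "subspace S"
    and add: "\<And>x y. x \<in> S \<Longrightarrow> y \<in> S \<Longrightarrow> f (x + y) = f x + f y"
    and scale: "\<And>r x. x \<in> S \<Longrightarrow> f (r *\<^sub>R x) = r *\<^sub>R f x"
    and G: "closed {(x, f x) | x. x \<in> S}"
  shows "\<exists>C. \<forall>x\<in>S. norm (f x) \<le> C * norm x"
proof -
  have S0: "0 \<in> S" using Ssub by (simp add: subspace_0)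
  have f0: "f 0 = 0" using scale[OF S0, of 0] by simp
  have fdiff: "f (x - y) = f x - f y" if "x \<in> S" "y \<in> S" for x y
    using add[OF that(1) subspace_scale[OF Ssub that(2), of "-1"]] scale[OF that(2), of "-1"] by simp
  define A where "A k = {x \<in> S. norm (f x) \<le> real k}" for k :: nat
  have clA: "closure (A k) \<subseteq> S" for k
    by (rule closure_minimal) (auto simp: A_def Scl)
  have "\<exists>k. (top_of_set S) interior_of (closure (A k)) \<noteq> {}"
  proof (rule ccontr)
    assume "\<not> ?thesis"
    then have emp: "\<And>k. (top_of_set S) interior_of (closure (A k)) = {}" by blast
    have "(top_of_set S) interior_of \<Union>(range (\<lambda>k. closure (A k))) = {}"
    proof (rule Baire_category_alt)
      have "completely_metrizable_space (top_of_set S)"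
        apply (rule completely_metrizable_space_closedin[OF completely_metrizable_space_euclidean])
        apply (subst closed_closedin[symmetric]) by (rule Scl)
      then show "completely_metrizable_space (top_of_set S) \<or>
            locally_compact_space (top_of_set S) \<and> regular_space (top_of_set S)" by blast
      show "countable (range (\<lambda>k. closure (A k)))" by (rule countable_image) simp
      fix T assume "T \<in> range (\<lambda>k. closure (A k))"
      then obtain k where Tk: "T = closure (A k)" by blast
      have "closedin (top_of_set S) (closure (A k))"
        by (rule closed_subset[OF clA closed_closure])
      then show "closedin (top_of_set S) T \<and> (top_of_set S) interior_of T = {}"
        using emp[of k] Tk by simp
    qed
    moreover have "\<Union>(range (\<lambda>k. closure (A k))) = S"
    proof
      show "S \<subseteq> \<Union>(range (\<lambda>k. closure (A k)))"
      proof
        fix x assume x: "x \<in> S"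
        have "norm (f x) \<le> real (nat \<lceil>norm (f x)\<rceil>)" by (rule real_nat_ceiling_ge)
        then have "x \<in> A (nat \<lceil>norm (f x)\<rceil>)" using x unfolding A_def by blast
        then have "x \<in> closure (A (nat \<lceil>norm (f x)\<rceil>))" using closure_subset by blast
        then show "x \<in> \<Union>(range (\<lambda>k. closure (A k)))" by blast
      qed
      show "\<Union>(range (\<lambda>k. closure (A k))) \<subseteq> S" using clA by blast
    qed
    ultimately have "(top_of_set S) interior_of S = {}" by simp
    then have "S = {}" using interior_of_topspace[of "top_of_set S"] by simp
    then show False using S0 by simp
  qed
  then obtain k x0 where "x0 \<in> (top_of_set S) interior_of (closure (A k))" by blast
  then obtain U where U: "openin (top_of_set S) U" "x0 \<in> U" "U \<subseteq> closure (A k)"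
    unfolding interior_of_def by blast
  then obtain V where V: "open V" "U = S \<inter> V" by (auto simp: openin_open)
  then obtain r where r: "r > 0" "ball x0 r \<subseteq> V" using U(2) by (meson IntD2 open_contains_ball)
  have x0S: "x0 \<in> S" using U V by auto
  have ballA: "S \<inter> ball x0 r \<subseteq> closure (A k)" using U V r by auto
  have approx0: "\<exists>a\<in>S. norm (f a) \<le> 2 * real k \<and> norm (z - a) < e"
    if z: "z \<in> S" "norm z < r" and e: "e > 0" for z e
  proof -
    have "x0 + z \<in> closure (A k)"
      using ballA z x0S Ssub by (auto simp: subspace_add dist_norm)
    then obtain a' where a': "a' \<in> A k" "dist a' (x0 + z) < e/2"
      using e by (meson closure_approachable half_gt_zero)
    have "x0 \<in> closure (A k)" using ballA x0S r by auto
    then obtain b where b: "b \<in> A k" "dist b x0 < e/2"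
      using e by (meson closure_approachable half_gt_zero)
    have aS: "a' \<in> S" "b \<in> S" using a' b by (auto simp: A_def)
    have "norm (f (a' - b)) \<le> 2 * real k"
    proof -
      have "norm (f (a' - b)) = norm (f a' - f b)" using fdiff aS by simp
      also have "\<dots> \<le> norm (f a') + norm (f b)" by (rule norm_triangle_ineq4)
      also have "\<dots> \<le> 2 * real k" using a' b by (auto simp: A_def)
      finally show ?thesis .
    qed
    moreover have "norm (z - (a' - b)) < e"
    proof -
      have "z - (a' - b) = ((x0 + z) - a') + (b - x0)" by (simp add: algebra_simps)
      then have "norm (z - (a' - b)) \<le> norm ((x0 + z) - a') + norm (b - x0)"
        by (metis norm_triangle_ineq)
      also have "\<dots> < e" using a' b by (simp add: dist_norm norm_minus_commute)
      finally show ?thesis .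
    qed
    ultimately show ?thesis using aS Ssub by (auto intro!: bexI[of _ "a' - b"] simp: subspace_diff)
  qed
  define M where "M = 4 * real k / r"
  have M0: "M \<ge> 0" using r by (simp add: M_def)
  have approx: "\<exists>a. a \<in> S \<and> norm (f a) \<le> M * norm z \<and> norm (z - a) < e"
    if z: "z \<in> S" and e: "e > 0" for z e
  proof (cases "z = 0")
    case True then show ?thesis using S0 f0 e by (intro exI[of _ 0]) auto
  next
    case False
    define t where "t = r / (2 * norm z)"
    have t: "t > 0" using False r by (simp add: t_def)
    have z'S: "t *\<^sub>R z \<in> S" using z Ssub by (simp add: subspace_scale)
    have "norm (t *\<^sub>R z) = r / 2" using False t r by (simp add: t_def)
    then have "norm (t *\<^sub>R z) < r" using r by simp
    then obtain a' where a': "a' \<in> S" "norm (f a') \<le> 2 * real k" "norm (t *\<^sub>R z - a') < e * t"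
      using approx0[OF z'S _ mult_pos_pos[OF e t]] by blast
    define a where "a = (1/t) *\<^sub>R a'"
    have aS: "a \<in> S" using a' Ssub by (simp add: a_def subspace_scale)
    have "norm (f a) = (1/t) * norm (f a')" using scale[OF a'(1)] t by (simp add: a_def)
    also have "\<dots> \<le> (1/t) * (2 * real k)" using a' t by (simp add: divide_right_mono)
    also have "\<dots> = M * norm z" using t r False by (simp add: t_def M_def field_simps)
    finally have fa: "norm (f a) \<le> M * norm z" .
    have "z - a = (1/t) *\<^sub>R (t *\<^sub>R z - a')" using t by (simp add: a_def algebra_simps)
    then have "norm (z - a) = (1/t) * norm (t *\<^sub>R z - a')" using t by simp
    also have "\<dots> < (1/t) * (e * t)" using a' t by (simp add: pos_divide_less_eq)
    also have "\<dots> = e" using t by simp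
    finally show ?thesis using aS fa by blast
  qed
  define g where "g z e = (SOME a. a \<in> S \<and> norm (f a) \<le> M * norm z \<and> norm (z - a) < e)" for z e
  have g: "g z e \<in> S \<and> norm (f (g z e)) \<le> M * norm z \<and> norm (z - g z e) < e"
    if "z \<in> S" "e > 0" for z e
    unfolding g_def by (rule someI_ex[OF approx[OF that]])
  show ?thesis
  proof (intro exI ballI)
    fix x assume xS: "x \<in> S"
    show "norm (f x) \<le> (2 * M) * norm x"
    proof (cases "x = 0")
      case True then show ?thesis using f0 by simp
    next
      case False
      define eps where "eps j = norm x * (1/2)^Suc j" for j :: nat
      have eps: "eps j > 0" for j using False by (simp add: eps_def)
      define zs where "zs = rec_nat x (\<lambda>j z. z - g z (eps j))"
      have zs0: "zs 0 = x" by (simp add: zs_def)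
      have zsS: "zs (Suc j) = zs j - g (zs j) (eps j)" for j by (simp add: zs_def)
      define a where "a j = g (zs j) (eps j)" for j
      have inv: "zs j \<in> S \<and> norm (zs j) \<le> norm x * (1/2)^j" for j
      proof (induction j)
        case 0 then show ?case using xS zs0 by simp
      next
        case (Suc j)
        then have "g (zs j) (eps j) \<in> S \<and> norm (zs j - g (zs j) (eps j)) < eps j"
          using g eps by blast
        then show ?case using Suc Ssub zsS[of j] by (simp add: subspace_diff eps_def less_imp_le)
      qed
      have aS: "a j \<in> S" for j using g inv eps by (simp add: a_def)
      have fa: "norm (f (a j)) \<le> M * (norm x * (1/2)^j)" for j
      proof -
        have "norm (f (a j)) \<le> M * norm (zs j)" using g inv eps by (simp add: a_def)
        also have "\<dots> \<le> M * (norm x * (1/2)^j)" using inv M0 by (simp add: mult_left_mono)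
        finally show ?thesis .
      qed
      have part: "(\<Sum>j<N. a j) = x - zs N" for N
        by (induction N) (simp_all add: zs0 zsS a_def)
      have sumS: "(\<Sum>j<N. a j) \<in> S" for N using part inv xS Ssub by (simp add: subspace_diff)
      have fsum: "f (\<Sum>j<N. a j) = (\<Sum>j<N. f (a j))" for N
      proof (induction N)
        case 0 then show ?case using f0 by simp
      next
        case (Suc N) then show ?case using add[OF sumS aS] by simp
      qed
      have zs_lim: "zs \<longlonglongrightarrow> 0"
      proof (rule Lim_null_comparison)
        show "\<forall>\<^sub>F j in sequentially. norm (zs j) \<le> norm x * (1/2)^j" using inv by simp
        show "(\<lambda>j. norm x * (1/2::real)^j) \<longlonglongrightarrow> 0"
          by (intro tendsto_mult_right_zero LIMSEQ_power_zero) simp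
      qed
      have lim1: "(\<lambda>N. \<Sum>j<N. a j) \<longlonglongrightarrow> x"
        using tendsto_diff[OF tendsto_const[of x] zs_lim] by (simp add: part)
      have summ_g: "summable (\<lambda>j. M * (norm x * (1/2::real)^j))"
        by (intro summable_mult summable_geometric) simp
      have summ: "summable (\<lambda>j. f (a j))"
        by (rule summable_comparison_test'[OF summ_g fa])
      have lim2: "(\<lambda>N. f (\<Sum>j<N. a j)) \<longlonglongrightarrow> suminf (\<lambda>j. f (a j))"
        using summable_LIMSEQ[OF summ] by (simp add: fsum)
      have "(x, suminf (\<lambda>j. f (a j))) \<in> {(x, f x) | x. x \<in> S}"
        by (rule closed_sequentially[OF G _ tendsto_Pair[OF lim1 lim2]]) (use sumS in blast)
      then have fx: "f x = suminf (\<lambda>j. f (a j))" by auto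
      have bnd: "norm (\<Sum>j<N. f (a j)) \<le> 2 * M * norm x" for N
      proof -
        have "norm (\<Sum>j<N. f (a j)) \<le> (\<Sum>j<N. M * (norm x * (1/2)^j))"
          by (rule order_trans[OF norm_sum sum_mono[OF fa]])
        also have "\<dots> \<le> (\<Sum>j. M * (norm x * (1/2::real)^j))"
          using summ_g M0 by (intro sum_le_suminf) auto
        also have "\<dots> = 2 * M * norm x"
          using suminf_geometric[of "1/2::real"] by (simp add: suminf_mult)
        finally show ?thesis .
      qed
      have "norm (suminf (\<lambda>j. f (a j))) \<le> 2 * M * norm x"
        by (rule Lim_norm_ubound[OF _ summable_LIMSEQ[OF summ]]) (use bnd in auto)
      then show ?thesis using fx by simp
    qed
  qed
qed
lemma pow_dom_anti: "k \<le> m \<Longrightarrow> pow_dom D T m \<subseteq> pow_dom D T k"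
proof (induction m arbitrary: k)
  case 0 then show ?case by simp
next
  case (Suc m)
  have "pow_dom D T (Suc m) \<subseteq> pow_dom D T m"
  proof (induction m)
    case 0 then show ?case by simp
  next
    case (Suc m) then show ?case by auto
  qed
  then show ?case using Suc by (metis le_Suc_eq order_refl order_trans)
qed

lemma quad_aux:
  fixes a b c :: real assumes "0 \<le> c" "a*a \<le> c*(b*b) + c*(a*b)"
  shows "a*a \<le> ((c+1)*b)*((c+1)*b)"
proof -
  have s: "0 \<le> (a - c*b)*(a - c*b)" by simp
  have e1: "(a - c*b)*(a - c*b) = a*a - 2*(c*(a*b)) + (c*c)*(b*b)" by algebra
  have e2: "((c+1)*b)*((c+1)*b) = (c*c)*(b*b) + 2*(c*(b*b)) + b*b" by algebra
  have "0 \<le> b*b" by simp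
  moreover have "0 \<le> c*(b*b)" using assms(1) by simp
  ultimately show ?thesis using s e1 e2 assms(2) by linarith
qed

theorem proposition2p3:
  fixes D :: "'a::chilbert_space set" and T :: "'a \<Rightarrow> 'a"
  assumes "linear_op D T"
    and "densely_defined D"
    and "closed_op D T"
    and "D \<subseteq> adj_dom D T"
    and "nilpotent_op D T"
  shows "D = UNIV \<and> bounded_linear T
     \<and> ((symmetric_op D T \<or> hyponormal_op D T) \<longrightarrow> (\<forall>x. T x = 0))"
proof -
  note dense = assms(2)
  have csub: "csubspace D" and Tadd: "\<And>x y. x \<in> D \<Longrightarrow> y \<in> D \<Longrightarrow> T (x + y) = T x + T y"
    and TC: "\<And>c x. x \<in> D \<Longrightarrow> T (scaleC c x) = scaleC c (T x)"
    using assms(1) by (auto simp: linear_op_def)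
  have D0: "0 \<in> D" and Dadd: "\<And>x y. x \<in> D \<Longrightarrow> y \<in> D \<Longrightarrow> x + y \<in> D"
    and DC: "\<And>c x. x \<in> D \<Longrightarrow> scaleC c x \<in> D"
    using csub by (auto simp: csubspace_def)
  have DR: "r *\<^sub>R x \<in> D" if "x \<in> D" for r x using DC[OF that] by (simp add: scaleR_scaleC)
  have TR: "T (r *\<^sub>R x) = r *\<^sub>R T x" if "x \<in> D" for r x using TC[OF that] by (simp add: scaleR_scaleC)
  have T0: "T 0 = 0" using TR[OF D0, of 0] by simp
  have Tdiff: "T (x - y) = T x - T y" if "x \<in> D" "y \<in> D" for x y
    using Tadd[OF that(1) DR[OF that(2), of "-1"]] TR[OF that(2), of "-1"] by simp
  have Ddiff: "x - y \<in> D" if "x \<in> D" "y \<in> D" for x y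
    using Dadd[OF that(1) DR[OF that(2), of "-1"]] by simp
  obtain n where n: "pow_dom D T n = D" "\<forall>x\<in>D. (T ^^ n) x = 0"
    using assms(5) by (auto simp: nilpotent_op_def)
  have TD: "T x \<in> D" if x: "x \<in> D" for x
  proof (cases "n \<ge> 2")
    case True
    then have "x \<in> pow_dom D T 2" using pow_dom_anti[OF True, of D T] n(1) x by auto
    then show ?thesis by (simp add: numeral_2_eq_2)
  next
    case False
    then have "n = 0 \<or> n = 1" by auto
    then show ?thesis
    proof
      assume "n = 0" then show ?thesis using n(1) by simp
    next
      assume "n = 1" then show ?thesis using n(2) x D0 by simp
    qed
  qed
  define G where "G = {(x, T x) | x. x \<in> D}"
  have Gcl: "closed G" using assms(3) by (simp add: G_def closed_op_def)
  have Gsub: "subspace G"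
    unfolding subspace_def
  proof (intro conjI)
    have "(0::'a \<times> 'a) = (0, T 0)" using T0 by (simp add: zero_prod_def)
    then show "(0::'a \<times> 'a) \<in> G" using D0 unfolding G_def by blast
    show "\<forall>p\<in>G. \<forall>q\<in>G. p + q \<in> G"
    proof (intro ballI)
      fix p q assume "p \<in> G" "q \<in> G"
      then obtain x y where xy: "x \<in> D" "y \<in> D" "p = (x, T x)" "q = (y, T y)" by (auto simp: G_def)
      then have "p + q = (x + y, T (x + y))" using Tadd by simp
      then show "p + q \<in> G" using Dadd xy unfolding G_def by blast
    qed
    show "\<forall>c. \<forall>p\<in>G. c *\<^sub>R p \<in> G"
    proof (intro allI ballI)
      fix c p assume "p \<in> G"
      then obtain x where x: "x \<in> D" "p = (x, T x)" by (auto simp: G_def)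
      then have "c *\<^sub>R p = (c *\<^sub>R x, T (c *\<^sub>R x))" using TR by simp
      then show "c *\<^sub>R p \<in> G" using DR x unfolding G_def by blast
    qed
  qed
  have adjD: "\<forall>u\<in>D. cinner (T u) y = cinner u (adj D T y)" if "y \<in> D" for y
    using adj_char[OF dense] assms(4) that by blast
  define F where "F p = adj D T (snd p)" for p :: "'a \<times> 'a"
  have Fadd: "F (p + q) = F p + F q" if "p \<in> G" "q \<in> G" for p q
  proof -
    have s: "snd p \<in> D" "snd q \<in> D" using that TD by (auto simp: G_def)
    show ?thesis unfolding F_def snd_add
      using s assms(4) Dadd[OF s]
      by (intro adj_unique[OF dense]) (auto simp: adjD cinner_add_right)
  qed
  have Fscale: "F (r *\<^sub>R p) = r *\<^sub>R F p" if "p \<in> G" for r p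
  proof -
    have s: "snd p \<in> D" using that TD by (auto simp: G_def)
    show ?thesis unfolding F_def snd_scaleR
      using s assms(4) DR[OF s]
      by (intro adj_unique[OF dense]) (auto simp: adjD cinner_scaleR_right)
  qed
  have Fgraph: "closed {(p, F p) | p. p \<in> G}"
  proof (subst closed_sequential_limits, intro allI impI, elim conjE)
    fix s :: "nat \<Rightarrow> ('a \<times> 'a) \<times> 'a" and l
    assume sin: "\<forall>j. s j \<in> {(p, F p) | p. p \<in> G}" and lim: "s \<longlonglongrightarrow> l"
    obtain p q where l: "l = (p, q)" by (cases l) auto
    have limp: "(\<lambda>j. fst (s j)) \<longlonglongrightarrow> p" using tendsto_fst[OF lim] l by simp
    have limq: "(\<lambda>j. snd (s j)) \<longlonglongrightarrow> q" using tendsto_snd[OF lim] l by simp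
    have fG: "fst (s j) \<in> G" for j using sin[rule_format, of j] by auto
    have pG: "p \<in> G" using closed_sequentially[OF Gcl fG limp] .
    then obtain x where x: "x \<in> D" "p = (x, T x)" by (auto simp: G_def)
    have sq: "snd (s j) = adj D T (snd (fst (s j)))" "snd (fst (s j)) \<in> D" for j
      using sin[rule_format, of j] TD by (auto simp: F_def G_def)
    have lim2: "(\<lambda>j. snd (fst (s j))) \<longlonglongrightarrow> T x" using tendsto_snd[OF limp] x by simp
    have "q - adj D T (T x) = 0"
    proof (rule dense_zero[OF dense], intro ballI)
      fix u assume u: "u \<in> D"
      have "(\<lambda>j. Re (cinner u (snd (s j)))) \<longlonglongrightarrow> Re (cinner u q)"
        by (rule bounded_linear.tendsto[OF bl_Re_right limq])
      moreover have "(\<lambda>j. Re (cinner u (snd (s j)))) = (\<lambda>j. Re (cinner (T u) (snd (fst (s j)))))"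
      proof (rule ext)
        fix j
        have "cinner (T u) (snd (fst (s j))) = cinner u (adj D T (snd (fst (s j))))"
          using adjD[OF sq(2)[of j]] u by blast
        then show "Re (cinner u (snd (s j))) = Re (cinner (T u) (snd (fst (s j))))"
          using sq(1)[of j] by simp
      qed
      ultimately have l1: "(\<lambda>j. Re (cinner (T u) (snd (fst (s j))))) \<longlonglongrightarrow> Re (cinner u q)"
        by simp
      have l2: "(\<lambda>j. Re (cinner (T u) (snd (fst (s j))))) \<longlonglongrightarrow> Re (cinner (T u) (T x))"
        by (rule bounded_linear.tendsto[OF bl_Re_right lim2])
      have "Re (cinner u q) = Re (cinner (T u) (T x))"
        by (rule LIMSEQ_unique[OF l1 l2])
      also have "\<dots> = Re (cinner u (adj D T (T x)))" using adjD[OF TD[OF x(1)]] u by simp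
      finally show "Re (cinner u (q - adj D T (T x))) = 0" by (simp add: cinner_diff_right)
    qed
    then have "q = F p" using x by (simp add: F_def)
    then show "l \<in> {(p, F p) | p. p \<in> G}" using l pG by blast
  qed
  obtain C where C: "\<forall>p\<in>G. norm (F p) \<le> C * norm p"
    using closed_graph_bound[OF Gcl Gsub Fadd Fscale Fgraph] by blast
  define C' where "C' = max C 0"
  define K where "K = C' + 1"
  have K1: "K \<ge> 1" by (simp add: K_def C'_def)
  have bound: "norm (T x) \<le> K * norm x" if x: "x \<in> D" for x
  proof -
    have xG: "(x, T x) \<in> G" using x by (auto simp: G_def)
    have "(norm (T x))^2 = Re (cinner (T x) (T x))" by (rule norm_sq_cinner)
    also have "\<dots> = Re (cinner x (adj D T (T x)))" using adjD[OF TD[OF x]] x by simp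
    also have "\<dots> \<le> norm x * norm (adj D T (T x))" by (metis abs_ge_self order_trans re_cs)
    also have "\<dots> \<le> norm x * (C' * (norm x + norm (T x)))"
    proof (rule mult_left_mono)
      have "norm (adj D T (T x)) \<le> C * norm (x, T x)" using C xG by (auto simp: F_def)
      also have "\<dots> \<le> C' * norm (x, T x)" by (simp add: C'_def mult_right_mono)
      also have "\<dots> \<le> C' * (norm x + norm (T x))"
        by (rule mult_left_mono[OF norm_Pair_le]) (simp add: C'_def)
      finally show "norm (adj D T (T x)) \<le> C' * (norm x + norm (T x))" .
    qed simp
    finally have h: "(norm (T x))^2 \<le> norm x * (C' * (norm x + norm (T x)))" .
    have c0: "C' \<ge> 0" by (simp add: C'_def)
    have h2: "norm (T x) * norm (T x) \<le> C' * (norm x * norm x) + C' * (norm (T x) * norm x)"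
      using h by (simp add: power2_eq_square algebra_simps)
    have "norm (T x) * norm (T x) \<le> (K * norm x) * (K * norm x)"
      unfolding K_def by (rule quad_aux[OF c0 h2])
    then have "(norm (T x))^2 \<le> (K * norm x)^2" by (simp add: power2_eq_square)
    moreover have "0 \<le> K * norm x" using K1 by simp
    ultimately show ?thesis by (rule power2_le_imp_le)
  qed
  have Dcl: "closed D"
  proof (subst closed_sequential_limits, intro allI impI, elim conjE)
    fix xs l assume xs: "\<forall>j. xs j \<in> D" and lim: "xs \<longlonglongrightarrow> l"
    have "Cauchy (\<lambda>j. T (xs j))"
    proof (rule CauchyI)
      fix e :: real assume e: "e > 0"
      obtain N where N: "\<forall>m\<ge>N. \<forall>k\<ge>N. norm (xs m - xs k) < e / K"
        using CauchyD[OF LIMSEQ_imp_Cauchy[OF lim], of "e / K"] e K1 by auto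
      show "\<exists>N. \<forall>m\<ge>N. \<forall>k\<ge>N. norm (T (xs m) - T (xs k)) < e"
      proof (intro exI allI impI)
        fix m k assume "m \<ge> N" "k \<ge> N"
        then have "norm (xs m - xs k) < e / K" using N by blast
        moreover have "norm (T (xs m) - T (xs k)) \<le> K * norm (xs m - xs k)"
          using bound[OF Ddiff[OF xs[rule_format] xs[rule_format]]] Tdiff xs by simp
        moreover have "K * norm (xs m - xs k) < K * (e / K)"
          using K1 \<open>norm (xs m - xs k) < e / K\<close> by (intro mult_strict_left_mono) auto
        moreover have "K * (e / K) = e" using K1 by simp
        ultimately show "norm (T (xs m) - T (xs k)) < e" by linarith
      qed
    qed
    then obtain y where y: "(\<lambda>j. T (xs j)) \<longlonglongrightarrow> y" using Cauchy_convergent_iff convergent_def by blast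
    have "(l, y) \<in> G"
      by (rule closed_sequentially[OF Gcl _ tendsto_Pair[OF lim y]]) (use xs in \<open>auto simp: G_def\<close>)
    then show "l \<in> D" by (auto simp: G_def)
  qed
  have DU: "D = UNIV" using dense Dcl by (simp add: densely_defined_def closure_closed)
  have bl: "bounded_linear T"
  proof (rule bounded_linear_intro[where K=K])
    show "T (x + y) = T x + T y" for x y using Tadd DU by blast
    show "T (r *\<^sub>R x) = r *\<^sub>R T x" for r x using TR DU by blast
    show "norm (T x) \<le> norm x * K" for x using bound[of x] DU by (simp add: mult.commute)
  qed
  have last: "\<forall>x. T x = 0" if hyp: "symmetric_op D T \<or> hyponormal_op D T"
  proof -
    have hyD: "\<forall>x\<in>D. norm (adj D T x) \<le> norm (T x)"
      using hyp unfolding symmetric_op_def hyponormal_op_def by force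
    have hy: "norm (adj D T x) \<le> norm (T x)" for x
      using hyD DU by blast
    have adjU: "cinner (T u) y = cinner u (adj D T y)" for u y
    proof -
      have "y \<in> D" "u \<in> D" using DU by auto
      then show ?thesis using adjD by blast
    qed
    have step: "\<forall>x. (T ^^ Suc k) x = 0" if kk: "\<forall>x. (T ^^ Suc (Suc k)) x = 0" for k
    proof
      fix x
      define w where "w = (T ^^ k) x"
      define v where "v = T w"
      have vv: "(T ^^ Suc k) x = v" by (simp add: v_def w_def)
      have "(T ^^ Suc (Suc k)) x = T v" by (simp add: v_def w_def)
      then have "T v = 0" using kk by simp
      then have "norm (adj D T v) \<le> 0" using hy[of v] by simp
      then have av: "adj D T v = 0" by simp
      have "cinner v v = cinner w (adj D T v)" unfolding v_def[symmetric] using adjU[of w v] v_def by simp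
      then have "cinner v v = 0" using av by (simp add: cinner_zero_right)
      then have "v = 0" by (simp add: cinner_self_eq_zero)
      then show "(T ^^ Suc k) x = 0" using vv by simp
    qed
    have ind: "(\<forall>x. (T ^^ Suc k) x = 0) \<longrightarrow> (\<forall>x. T x = 0)" for k
    proof (induction k)
      case 0 then show ?case by simp
    next
      case (Suc k) then show ?case using step[of k] by blast
    qed
    show ?thesis
    proof (cases n)
      case 0
      have "\<forall>x. x = (0::'a)" using n(2) DU 0 by simp
      then show ?thesis using T0 by blast
    next
      case (Suc k)
      then have "\<forall>x. (T ^^ Suc k) x = 0" using n(2) DU by simp
      then show ?thesis using ind[of k] by blast
    qed
  qed
  show ?thesis using DU bl last by blast
qed
end
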